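(* Let $X$ be a real separable Hilbert space and $F:X\to X$ monotone and hemicontinuous; let $x^\dagger\in X$ solve $F(x)=y$ and let $\bar x\in X$. Assume: (i) there is $r>\|x^\dagger-\bar x\|$ such that $F$ is Fréchet differentiable on the ball $\mathcal B_r(x^\dagger)$ with derivatives $F'(x)\in\mathcal L(X)$, and $x\mapsto F'(x)$ is continuous at every $x\in\mathcal B_r(x^\dagger)$; (ii) there is $k_0>0$ such that for all $\tilde x,x\in\mathcal B_r(x^\dagger)$ and $v\in X$ there exists $g(\tilde x,x,v)\in X$ with $$(F'(\tilde x)-F'(x))v=F'(x)\,g(\tilde x,x,v),\qquad \|g(\tilde x,x,v)\|\le k_0\|\tilde x-x\|\|v\|;$$ (iii) $k_0\|x^\dagger-\bar x\|<2$. Let $A:=F'(x^\dagger)$, for $\alpha>0$ let $x_\alpha$ solve $F(x_\alpha)+\alpha(x_\alpha-\bar x)=y$, and let $B^F_{x^\dagger}(\alpha):=\|x_\alpha-x^\dagger\|$ and $B^A_{x^\dagger}(\alpha):=\alpha\|(A+\alpha I)^{-1}(x^\dagger-\bar x)\|$. Then for all $\alpha>0$: $B^F_{x^\dagger}(\alpha)\le\|x^\dagger-\bar x\|$ (so $x_\alpha\in\mathcal B_r(x^\dagger)$), $$B^F_{x^\dagger}(\alpha)\le \frac{2+2k_0\|x^\dagger-\bar x\|}{2-k_0\|x^\dagger-\bar x\|}\,B^A_{x^\dagger}(\alpha),$$ and for every $\delta\ge0$ and $y^\delta$ with $\|y-y^\delta\|\le\delta$, the solution $x^\delta_\alpha$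 of $F(x^\delta_\alpha)+\alpha(x^\delta_\alpha-\bar x)=y^\delta$ satisfies $$\|x^\delta_\alpha-x^\dagger\|\le \frac{2+2k_0\|x^\dagger-\bar x\|}{2-k_0\|x^\dagger-\bar x\|}\,B^A_{x^\dagger}(\alpha)+\frac\delta\alpha.$$
   Context: Monotone: $\langle F(x)-F(\tilde x),x-\tilde x\rangle\ge0$ for all $x,\tilde x$; hemicontinuous: $t\mapsto\langle F(x+tv),z\rangle$ continuous on $[0,1]$. $\mathcal B_r(x^\dagger)$ is the closed ball of radius $r$ around $x^\dagger$; $\mathcal L(X)$ the bounded linear operators on $X$. The Fréchet derivatives of a monotone operator are monotone, so $A+\alpha I$ is boundedly invertible. *)

theory Defs
  imports "HOL-Analysis.Analysis"
begin

definition monotone_op :: "('a::real_inner \<Rightarrow> 'a) \<Rightarrow> bool" where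
  "monotone_op F \<longleftrightarrow> (\<forall>x x'. inner (F x - F x') (x - x') \<ge> 0)"

definition hemicontinuous :: "('a::real_inner \<Rightarrow> 'a) \<Rightarrow> bool" where
  "hemicontinuous F \<longleftrightarrow>
     (\<forall>x v z. continuous_on {0..1} (\<lambda>t::real. inner (F (x + t *\<^sub>R v)) z))"

end

theory Submission
  imports Defs
begin


lemma norm_sq_diff_scale:
  fixes d b :: "'a::real_inner"
  shows "(norm (d - t *\<^sub>R b))\<^sup>2 = (norm d)\<^sup>2 - 2 * t * inner b d + t\<^sup>2 * (norm b)\<^sup>2"
  unfolding power2_norm_eq_inner by (simp add: inner_diff_left inner_diff_right inner_commute algebra_simps power2_eq_square)

lemma mono_surj:
  fixes A :: "'a::{real_inner,complete_space} \<Rightarrow>\<^sub>L 'a"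
  assumes mon: "\<And>v. 0 \<le> inner (A v) v" and al: "\<alpha> > 0"
  shows "\<exists>u. A u + \<alpha> *\<^sub>R u = z"
proof -
  define K where "K = norm A + \<alpha>"
  have nA: "norm A \<ge> 0" by simp
  have K: "K > 0" "\<alpha> \<le> K" using al nA unfolding K_def by linarith+
  define \<tau> where "\<tau> = \<alpha> / K\<^sup>2"
  define x where "x = \<alpha>\<^sup>2 / K\<^sup>2"
  have x: "0 < x" "x \<le> 1" using K al by (auto simp: x_def field_simps power_mono)
  define c where "c = 1 - x / 2"
  have c: "0 \<le> c" "c < 1" using x by (auto simp: c_def)
  define f where "f u = u - \<tau> *\<^sub>R (A u + \<alpha> *\<^sub>R u - z)" for u
  have "\<forall>u v. dist (f u) (f v) \<le> c * dist u v"
  proof (intro allI)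
    fix u v
    define d :: 'a where "d = u - v"
    define b where "b = A d + \<alpha> *\<^sub>R d"
    have fd: "f u - f v = d - \<tau> *\<^sub>R b"
      by (simp add: f_def d_def b_def blinfun.diff_right algebra_simps)
    have ib: "inner b d \<ge> \<alpha> * (norm d)\<^sup>2"
      using mon[of d] by (simp add: b_def inner_add_left power2_norm_eq_inner)
    have nb: "norm b \<le> K * norm d"
    proof -
      have "norm b \<le> norm (A d) + norm (\<alpha> *\<^sub>R d)" unfolding b_def by (rule norm_triangle_ineq)
      also have "\<dots> \<le> norm A * norm d + \<alpha> * norm d" using norm_blinfun[of A d] al by simp
      finally show ?thesis by (simp add: K_def algebra_simps)
    qed
    have tau: "\<tau> \<ge> 0" using al K by (simp add: \<tau>_def)
    have "(norm (d - \<tau> *\<^sub>R b))\<^sup>2 = (norm d)\<^sup>2 - 2 * \<tau> * inner b d + \<tau>\<^sup>2 * (norm b)\<^sup>2"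
      by (rule norm_sq_diff_scale)
    also have "\<dots> \<le> (norm d)\<^sup>2 - 2 * \<tau> * (\<alpha> * (norm d)\<^sup>2) + \<tau>\<^sup>2 * (K * norm d)\<^sup>2"
    proof -
      have "(norm b)\<^sup>2 \<le> (K * norm d)\<^sup>2" using nb by (simp add: power_mono)
      then have "\<tau>\<^sup>2 * (norm b)\<^sup>2 \<le> \<tau>\<^sup>2 * (K * norm d)\<^sup>2" by (simp add: mult_left_mono)
      moreover have "2 * \<tau> * (\<alpha> * (norm d)\<^sup>2) \<le> 2 * \<tau> * inner b d" using ib tau by (simp add: mult_left_mono)
      ultimately show ?thesis by linarith
    qed
    also have "\<dots> = (1 - x) * (norm d)\<^sup>2" using K by (simp add: \<tau>_def x_def field_simps power2_eq_square)
    also have "\<dots> \<le> c\<^sup>2 * (norm d)\<^sup>2"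
    proof -
      have "1 - x \<le> c\<^sup>2" by (simp add: c_def power2_eq_square field_simps)
      then show ?thesis by (simp add: mult_right_mono)
    qed
    also have "\<dots> = (c * norm d)\<^sup>2" by (simp add: power_mult_distrib)
    finally have "norm (d - \<tau> *\<^sub>R b) \<le> c * norm d"
      using c by (metis norm_ge_zero power2_le_imp_le mult_nonneg_nonneg)
    then show "dist (f u) (f v) \<le> c * dist u v" by (simp add: dist_norm fd d_def)
  qed
  then obtain u where "f u = u" using banach_fix_type[OF c] by blast
  then have "\<tau> *\<^sub>R (A u + \<alpha> *\<^sub>R u - z) = 0" by (simp add: f_def)
  moreover have "\<tau> \<noteq> 0" using al K by (simp add: \<tau>_def)
  ultimately show ?thesis by auto
qed



lemma mono_inv:
  fixes A :: "'a::{real_inner,complete_space} \<Rightarrow>\<^sub>L 'a"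
  assumes mon: "\<And>v. 0 \<le> inner (A v) v" and al: "\<alpha> > 0"
  defines "B \<equiv> (\<lambda>u. A u + \<alpha> *\<^sub>R u)"
  shows "\<And>z. B (inv B z) = z" "\<And>u. inv B (B u) = u" "bounded_linear (inv B)"
    "\<And>g. norm (inv B (A g)) \<le> norm g" "\<And>z. norm (inv B z) \<le> norm z / \<alpha>"
proof -
  have lower: "\<alpha> * norm u \<le> norm (B u)" for u
  proof -
    have "\<alpha> * (norm u)\<^sup>2 \<le> inner (B u) u"
      using mon[of u] by (simp add: B_def inner_add_left power2_norm_eq_inner)
    also have "\<dots> \<le> norm (B u) * norm u" by (rule norm_cauchy_schwarz)
    finally have "\<alpha> * norm u * norm u \<le> norm (B u) * norm u" by (simp add: power2_eq_square mult.assoc)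
    then show ?thesis
      by (cases "norm u = 0") (auto simp: mult_le_cancel_right al)
  qed
  have Blin: "B (x - y) = B x - B y" "B (x + y) = B x + B y" "B (c *\<^sub>R x) = c *\<^sub>R B x" for x y c
    unfolding B_def blinfun.diff_right blinfun.add_right blinfun.scaleR_right
      scaleR_diff_right scaleR_add_right scaleR_scaleR
    by (simp_all add: mult.commute)
  have injB: "inj B"
  proof (rule injI)
    fix x y assume "B x = B y"
    then have "B (x - y) = 0" by (simp add: Blin)
    then have "\<alpha> * norm (x - y) \<le> 0" using lower[of "x - y"] by simp
    then show "x = y" using al by (simp add: mult_le_0_iff)
  qed
  show Bi: "B (inv B z) = z" for z
  proof -
    obtain u where "A u + \<alpha> *\<^sub>R u = z" using mono_surj[OF mon al] by blast
    then have "z \<in> range B" by (auto simp: B_def)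
    then show ?thesis by (rule f_inv_into_f)
  qed
  show iB: "inv B (B u) = u" for u using injB by simp
  have Rn: "norm (inv B z) \<le> norm z / \<alpha>" for z
    using lower[of "inv B z"] al by (simp add: Bi field_simps)
  then show "norm (inv B z) \<le> norm z / \<alpha>" for z .
  show "bounded_linear (inv B)"
  proof (rule bounded_linear_intro[where K = "1/\<alpha>"])
    show "inv B (x + y) = inv B x + inv B y" for x y
    proof -
      have "B (inv B x + inv B y) = x + y" by (simp only: Blin Bi)
      then have "inv B (x + y) = inv B (B (inv B x + inv B y))" by simp
      then show ?thesis by (simp only: iB)
    qed
    show "inv B (c *\<^sub>R x) = c *\<^sub>R inv B x" for c x
    proof -
      have "B (c *\<^sub>R inv B x) = c *\<^sub>R x" by (simp only: Blin Bi)
      then have "inv B (c *\<^sub>R x) = inv B (B (c *\<^sub>R inv B x))" by simp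
      then show ?thesis by (simp only: iB)
    qed
    show "norm (inv B x) \<le> norm x * (1 / \<alpha>)" for x using Rn[of x] by simp
  qed
  show "norm (inv B (A g)) \<le> norm g" for g
  proof -
    define u where "u = inv B g"
    have "B (A u) = A (B u)"
      by (simp add: B_def blinfun.add_right blinfun.scaleR_right)
    also have "\<dots> = A g" by (simp add: u_def Bi)
    finally have "inv B (B (A u)) = inv B (A g)" by simp
    then have e: "inv B (A g) = A u" by (simp only: iB)
    have "(norm (A u))\<^sup>2 \<le> (norm (B u))\<^sup>2"
    proof -
      have "(norm (B u))\<^sup>2 = (norm (A u))\<^sup>2 + 2 * \<alpha> * inner (A u) u + \<alpha>\<^sup>2 * (norm u)\<^sup>2"
        unfolding B_def power2_norm_eq_inner
        by (simp add: inner_add_left inner_add_right inner_commute algebra_simps power2_eq_square)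
      moreover have "0 \<le> 2 * \<alpha> * inner (A u) u" using mon[of u] al by simp
      ultimately show ?thesis by simp
    qed
    then have "norm (A u) \<le> norm (B u)" using power2_le_imp_le norm_ge_zero by blast
    then show ?thesis by (simp add: e u_def Bi)
  qed
qed



lemma line_deriv:
  fixes F :: "'a::real_normed_vector \<Rightarrow> 'a" and L :: "'a \<Rightarrow>\<^sub>L 'a"
  assumes "(F has_derivative blinfun_apply L) (at (x + t *\<^sub>R v))"
  shows "((\<lambda>s. F (x + s *\<^sub>R v)) has_derivative (\<lambda>s. s *\<^sub>R L v)) (at t)"
proof -
  have "((\<lambda>s. x + s *\<^sub>R v) has_derivative (\<lambda>s. s *\<^sub>R v)) (at t)"
    by (auto intro!: derivative_eq_intros)
  from diff_chain_at[OF this, of F] assms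
  have "((F \<circ> (\<lambda>s. x + s *\<^sub>R v)) has_derivative (blinfun_apply L \<circ> (\<lambda>s. s *\<^sub>R v))) (at t)"
    by simp
  then show ?thesis by (simp add: o_def blinfun.scaleR_right)
qed

lemma line_deriv_real:
  fixes F :: "'a::real_inner \<Rightarrow> 'a" and L :: "'a \<Rightarrow>\<^sub>L 'a"
  assumes R: "bounded_linear R"
    and d: "(F has_derivative blinfun_apply L) (at (x + t *\<^sub>R v))"
  shows "((\<lambda>s. inner (R (F (x + s *\<^sub>R v)) - s *\<^sub>R c) q) has_field_derivative inner (R (L v) - c) q) (at t)"
proof -
  have "((\<lambda>s. R (F (x + s *\<^sub>R v))) has_derivative (\<lambda>s. R (s *\<^sub>R L v))) (at t)"
    by (rule bounded_linear.has_derivative[OF R line_deriv[OF d]])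
  then have "((\<lambda>s. R (F (x + s *\<^sub>R v)) - s *\<^sub>R c) has_derivative (\<lambda>s. R (s *\<^sub>R L v) - s *\<^sub>R c)) (at t)"
    by (auto intro!: derivative_eq_intros)
  then have "((\<lambda>s. inner (R (F (x + s *\<^sub>R v)) - s *\<^sub>R c) q) has_derivative (\<lambda>s. inner (R (s *\<^sub>R L v) - s *\<^sub>R c) q)) (at t)"
    by (rule has_derivative_inner_left)
  then show ?thesis
  proof (rule has_derivative_imp_has_field_derivative)
    fix s :: real
    have "R (s *\<^sub>R L v) = s *\<^sub>R R (L v)" using R by (simp add: linear_simps)
    then show "s * inner (R (L v) - c) q = inner (R (s *\<^sub>R L v) - s *\<^sub>R c) q"
      by (simp add: inner_diff_left right_diff_distrib)
  qed
qed

lemma deriv_mono: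
  fixes F :: "'a::real_inner \<Rightarrow> 'a" and A :: "'a \<Rightarrow>\<^sub>L 'a"
  assumes mono: "monotone_op F" and d: "(F has_derivative blinfun_apply A) (at x)"
  shows "0 \<le> inner (A v) v"
proof -
  have d0: "(F has_derivative blinfun_apply A) (at (x + 0 *\<^sub>R v))" using d by simp
  from line_deriv_real[OF bounded_linear_ident d0, of 0 v]
  have D: "((\<lambda>s. inner (F (x + s *\<^sub>R v) - s *\<^sub>R 0) v) has_field_derivative inner (A v - 0) v) (at 0)"
    by simp
  define g where "g = (\<lambda>s. inner (F (x + s *\<^sub>R v)) v)"
  have D': "(g has_field_derivative inner (A v) v) (at 0)"
    using D by (simp add: g_def)
  then have lim: "((\<lambda>y. (g y - g 0) / (y - 0)) \<longlongrightarrow> inner (A v) v) (at_right 0)"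
    unfolding has_field_derivative_iff by (rule tendsto_mono[OF at_le, rotated]) simp
  have ev: "\<forall>\<^sub>F y in at_right 0. 0 \<le> (g y - g 0) / (y - 0)"
  proof (rule eventually_at_rightI[where b = 1])
    fix y :: real assume y: "y \<in> {0<..<1}"
    have "0 \<le> inner (F (x + y *\<^sub>R v) - F x) ((x + y *\<^sub>R v) - x)"
      using mono unfolding monotone_op_def by blast
    then have "0 \<le> y * (g y - g 0)" by (simp add: g_def inner_diff_left)
    then have "0 \<le> g y - g 0" using y by (simp add: zero_le_mult_iff)
    then show "0 \<le> (g y - g 0) / (y - 0)" using y by simp
  qed simp
  show ?thesis
    by (rule tendsto_lowerbound[OF lim ev]) simp
qed



theorem proposition5p1:
  fixes F :: "'a::{real_inner,complete_space} \<Rightarrow> 'a"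
    and F' :: "'a \<Rightarrow> 'a \<Rightarrow>\<^sub>L 'a"
    and y xdag xbar :: 'a and r k0 :: real
  assumes sep: "separable_space (euclidean :: 'a topology)"
    and mono: "monotone_op F"
    and hemi: "hemicontinuous F"
    and sol: "F xdag = y"
    and r: "r > norm (xdag - xbar)"
    and deriv: "\<And>x. x \<in> cball xdag r \<Longrightarrow> (F has_derivative blinfun_apply (F' x)) (at x)"
    and dcont: "continuous_on (cball xdag r) F'"
    and k0: "k0 > 0"
    and tc: "\<And>xt x v. xt \<in> cball xdag r \<Longrightarrow> x \<in> cball xdag r \<Longrightarrow>
               \<exists>g. (F' xt - F' x) v = F' x g \<and> norm g \<le> k0 * norm (xt - x) * norm v"
    and small: "k0 * norm (xdag - xbar) < 2"
  shows "\<forall>\<alpha>>0. \<forall>xa. F xa + \<alpha> *\<^sub>R (xa - xbar) = y \<longrightarrow>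
           (let A = F' xdag;
                BA = \<alpha> * norm (inv (\<lambda>u. A u + \<alpha> *\<^sub>R u) (xdag - xbar));
                C = (2 + 2 * k0 * norm (xdag - xbar)) / (2 - k0 * norm (xdag - xbar))
            in norm (xa - xdag) \<le> norm (xdag - xbar)
             \<and> norm (xa - xdag) \<le> C * BA
             \<and> (\<forall>\<delta> yd xd. \<delta> \<ge> 0 \<longrightarrow> norm (y - yd) \<le> \<delta> \<longrightarrow>
                    F xd + \<alpha> *\<^sub>R (xd - xbar) = yd \<longrightarrow>
                    norm (xd - xdag) \<le> C * BA + \<delta> / \<alpha>))"
proof (intro allI impI)
  fix \<alpha> :: real and xa :: 'a
  assume al: "\<alpha> > 0" and eq: "F xa + \<alpha> *\<^sub>R (xa - xbar) = y"
  define A where "A = F' xdag"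
  define B where "B = (\<lambda>u. A u + \<alpha> *\<^sub>R u)"
  define R where "R = inv B"
  define w where "w = xdag - xbar"
  define e where "e = xa - xdag"
  define s where "s = norm w"
  define BA where "BA = \<alpha> * norm (R w)"
  define C where "C = (2 + 2 * k0 * s) / (2 - k0 * s)"
  have "0 \<le> norm (xdag - xbar)" by simp
  then have "0 \<le> r" using r by linarith
  then have xdin: "xdag \<in> cball xdag r" by simp
  have monA: "0 \<le> inner (A v) v" for v
    unfolding A_def by (rule deriv_mono[OF mono deriv[OF xdin]])
  note inv = mono_inv[OF monA al, folded B_def, folded R_def]
  have Rlin: "bounded_linear R" by (rule inv(3))
  have Fxa: "F xa - F xdag = - \<alpha> *\<^sub>R (e + w)"
    using eq sol by (simp add: e_def w_def algebra_simps)
  have P1: "norm e \<le> s"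
  proof -
    have "0 \<le> inner (F xa - F xdag) (xa - xdag)"
      using mono unfolding monotone_op_def by blast
    then have "0 \<le> - \<alpha> * inner (e + w) e" by (simp add: Fxa e_def)
    then have "inner (e + w) e \<le> 0" using al by (simp add: mult_le_0_iff)
    then have "(norm e)\<^sup>2 \<le> - inner w e"
      by (simp add: inner_add_left power2_norm_eq_inner)
    also have "\<dots> \<le> norm w * norm e"
      using norm_cauchy_schwarz[of "-w" e] by simp
    finally have "norm e * norm e \<le> s * norm e" by (simp add: power2_eq_square s_def)
    then show ?thesis
      by (cases "norm e = 0") (auto simp: s_def)
  qed
  have s_lt: "k0 * s < 2" using small by (simp add: s_def w_def)
  have s_r: "s < r" using r by (simp add: s_def w_def)
  have BA0: "BA \<ge> 0" using al by (simp add: BA_def)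
  define D where "D = F xa - F xdag - A e"
  define q where "q = R D"
  define c where "c = k0 * (norm e)\<^sup>2 * norm q"
  have inball: "xdag + t *\<^sub>R e \<in> cball xdag r" if "0 \<le> t" "t \<le> 1" for t
  proof -
    have "norm (t *\<^sub>R e) \<le> norm e" using that by (simp add: mult_left_le_one_le)
    then show ?thesis using P1 s_r by (simp add: dist_norm)
  qed
  define \<psi> where "\<psi> = (\<lambda>t. inner (R (F (xdag + t *\<^sub>R e)) - t *\<^sub>R R (A e)) q - c * t\<^sup>2 / 2)"
  have "\<psi> 1 \<le> \<psi> 0"
  proof (rule DERIV_nonpos_imp_nonincreasing[of 0 1])
    fix t :: real assume t: "0 \<le> t" "t \<le> 1"
    have dF: "(F has_derivative blinfun_apply (F' (xdag + t *\<^sub>R e))) (at (xdag + t *\<^sub>R e))"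
      using deriv inball t by blast
    have d1: "((\<lambda>s. inner (R (F (xdag + s *\<^sub>R e)) - s *\<^sub>R R (A e)) q) has_field_derivative
        inner (R (F' (xdag + t *\<^sub>R e) e) - R (A e)) q) (at t)"
      by (rule line_deriv_real[OF Rlin dF])
    have d2: "((\<lambda>s. c * s\<^sup>2 / 2) has_field_derivative c * t) (at t)"
      by (auto intro!: derivative_eq_intros)
    have dpsi: "(\<psi> has_field_derivative inner (R (F' (xdag + t *\<^sub>R e) e) - R (A e)) q - c * t) (at t)"
      unfolding \<psi>_def by (rule DERIV_diff[OF d1 d2])
    obtain g where g: "(F' (xdag + t *\<^sub>R e) - F' xdag) e = F' xdag g"
      "norm g \<le> k0 * norm (xdag + t *\<^sub>R e - xdag) * norm e"
      using tc[OF inball[OF t] xdin] by blast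
    have "R (F' (xdag + t *\<^sub>R e) e) - R (A e) = R (A g)"
    proof -
      have "R (F' (xdag + t *\<^sub>R e) e) - R (A e) = R (F' (xdag + t *\<^sub>R e) e - A e)"
        using Rlin by (simp add: linear_simps)
      also have "\<dots> = R (A g)" using g(1) by (simp add: A_def blinfun.diff_left)
      finally show ?thesis .
    qed
    moreover have "norm (R (A g)) \<le> t * (k0 * (norm e)\<^sup>2)"
    proof -
      have "norm (R (A g)) \<le> norm g" by (rule inv(4))
      also have "\<dots> \<le> k0 * (t * norm e) * norm e" using g(2) t by simp
      finally show ?thesis by (simp add: power2_eq_square algebra_simps)
    qed
    ultimately have "inner (R (F' (xdag + t *\<^sub>R e) e) - R (A e)) q \<le> c * t"
    proof -
      assume h1: "R (F' (xdag + t *\<^sub>R e) e) - R (A e) = R (A g)"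
        and h2: "norm (R (A g)) \<le> t * (k0 * (norm e)\<^sup>2)"
      have "inner (R (A g)) q \<le> norm (R (A g)) * norm q" by (rule norm_cauchy_schwarz)
      also have "\<dots> \<le> t * (k0 * (norm e)\<^sup>2) * norm q" using h2 by (simp add: mult_right_mono)
      finally show ?thesis using h1 by (simp add: c_def algebra_simps)
    qed
    then show "\<exists>y. (\<psi> has_field_derivative y) (at t) \<and> y \<le> 0"
      using dpsi by auto
  qed simp
  moreover have "\<psi> 1 - \<psi> 0 = (norm q)\<^sup>2 - c / 2"
  proof -
    have "R (F xa) - R (A e) - R (F xdag) = q"
      using Rlin by (simp add: q_def D_def linear_simps)
    then show ?thesis
      by (simp add: \<psi>_def e_def inner_diff_left power2_norm_eq_inner algebra_simps)
  qed
  ultimately have "(norm q)\<^sup>2 \<le> k0 * (norm e)\<^sup>2 * norm q / 2" by (simp add: c_def)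
  then have qb: "norm q \<le> k0 * (norm e)\<^sup>2 / 2"
    using k0 by (cases "norm q = 0") (auto simp: power2_eq_square)
  have "B e + D = - \<alpha> *\<^sub>R w"
    using Fxa by (simp add: B_def D_def algebra_simps)
  then have "B e = - \<alpha> *\<^sub>R w - D" by (simp add: eq_diff_eq)
  then have "R (B e) = R (- \<alpha> *\<^sub>R w - D)" by simp
  then have "e = R (- \<alpha> *\<^sub>R w - D)" using inv(2)[of e] by (simp add: B_def)
  also have "\<dots> = - \<alpha> *\<^sub>R R w - q"
    using Rlin by (simp add: q_def linear_simps)
  finally have "norm e \<le> BA + norm q"
    using al norm_triangle_ineq4[of "- (\<alpha> *\<^sub>R R w)" q] by (simp add: BA_def)
  also have "\<dots> \<le> BA + k0 * (norm e)\<^sup>2 / 2" using qb by simp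
  also have "\<dots> \<le> BA + (k0 * s / 2) * norm e"
  proof -
    have "k0 * (norm e * norm e) \<le> k0 * (s * norm e)"
      using P1 k0 by (simp add: mult_right_mono)
    then show ?thesis by (simp add: power2_eq_square algebra_simps)
  qed
  finally have P2': "norm e * (2 - k0 * s) \<le> 2 * BA" by (simp add: algebra_simps)
  have P2: "norm e \<le> C * BA"
  proof -
    have pos: "2 - k0 * s > 0" using s_lt by simp
    have "norm e \<le> 2 * BA / (2 - k0 * s)" using P2' pos by (simp add: field_simps)
    also have "\<dots> \<le> C * BA"
    proof -
      have "2 \<le> 2 + 2 * k0 * s" using k0 by (simp add: s_def)
      then have "2 * BA \<le> (2 + 2 * k0 * s) * BA" using BA0 by (simp add: mult_right_mono)
      then have "2 * BA / (2 - k0 * s) \<le> (2 + 2 * k0 * s) * BA / (2 - k0 * s)"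
        using pos by (simp add: divide_right_mono)
      then show ?thesis by (simp add: C_def)
    qed
    finally show ?thesis .
  qed
  have P3: "norm (xd - xdag) \<le> C * BA + \<delta> / \<alpha>"
    if "\<delta> \<ge> 0" "norm (y - yd) \<le> \<delta>" "F xd + \<alpha> *\<^sub>R (xd - xbar) = yd" for \<delta> yd xd
  proof -
    define d where "d = xd - xa"
    have "F xd - F xa = (yd - y) - \<alpha> *\<^sub>R d"
      using that(3) eq by (simp add: d_def algebra_simps)
    moreover have "0 \<le> inner (F xd - F xa) (xd - xa)"
      using mono unfolding monotone_op_def by blast
    ultimately have "0 \<le> inner (yd - y) d - \<alpha> * (norm d)\<^sup>2"
      by (simp add: d_def inner_diff_left power2_norm_eq_inner)
    then have "\<alpha> * (norm d)\<^sup>2 \<le> inner (yd - y) d" by simp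
    also have "\<dots> \<le> norm (yd - y) * norm d" by (rule norm_cauchy_schwarz)
    also have "\<dots> \<le> \<delta> * norm d" using that(2) by (simp add: norm_minus_commute mult_right_mono)
    finally have "\<alpha> * norm d * norm d \<le> \<delta> * norm d" by (simp add: power2_eq_square mult.assoc)
    then have "\<alpha> * norm d \<le> \<delta>" using that(1) by (cases "norm d = 0") auto
    then have dn: "norm d \<le> \<delta> / \<alpha>" using al by (simp add: field_simps)
    have "norm (xd - xdag) \<le> norm d + norm e"
      using norm_triangle_ineq[of d e] by (simp add: d_def e_def)
    then show ?thesis using dn P2 by simp
  qed
  show "let A = F' xdag;
                BA = \<alpha> * norm (inv (\<lambda>u. A u + \<alpha> *\<^sub>R u) (xdag - xbar));
                C = (2 + 2 * k0 * norm (xdag - xbar)) / (2 - k0 * norm (xdag - xbar))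
            in norm (xa - xdag) \<le> norm (xdag - xbar)
             \<and> norm (xa - xdag) \<le> C * BA
             \<and> (\<forall>\<delta> yd xd. \<delta> \<ge> 0 \<longrightarrow> norm (y - yd) \<le> \<delta> \<longrightarrow>
                    F xd + \<alpha> *\<^sub>R (xd - xbar) = yd \<longrightarrow>
                    norm (xd - xdag) \<le> C * BA + \<delta> / \<alpha>)"
    unfolding Let_def
    using P1 P2 P3 by (simp add: A_def B_def R_def w_def e_def s_def BA_def C_def)
qed

end
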